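(* Let $X$ be a super $X$-set parameter, let $t\ge 0$ be an integer, let $G$ be a graph, and let $H$ be an induced subgraph of $\mathfrak{X}(G)$ with $H\cong Q_t$. Then there are $X$-sets $S\subseteq T$ of $G$ with $|T\setminus S|=t$ such that $V(H)=\{R: S\subseteq R\subseteq T\}$; i.e., $V(H)$ is an interval of length $t$ in the poset $(\mathcal{P}(V(G)),\subseteq)$.
   Context: All graphs are finite, simple, undirected, with nonempty vertex set. A super $X$-set parameter $X$ assigns to each graph $G$ a family of subsets of $V(G)$, called the $X$-sets of $G$, such that: every graph isomorphism maps $X$-sets to $X$-sets; every graph has at least one $X$-set; and (Superset) if $S$ is an $X$-set of $G$ and $S\subseteq S'\subseteq V(G)$, then $S'$ is an $X$-set of $G$. The $X$-TAR graph $\mathfrak{X}(G)$ has as vertices the $X$-sets of $G$, with $S_1S_2$ an edge iff $|S_1\ominus S_2|=1$. $Q_t$ is the $t$-dimensional hypercube. *)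

theory Defs
  imports Main
begin

type_synonym 'v graph = "'v set \<times> 'v set set"

definition verts :: "'v graph \<Rightarrow> 'v set" where "verts G = fst G"
definition edges :: "'v graph \<Rightarrow> 'v set set" where "edges G = snd G"

definition is_graph :: "'v graph \<Rightarrow> bool" where
  "is_graph G \<longleftrightarrow> finite (verts G) \<and> verts G \<noteq> {} \<and>
     (\<forall>e\<in>edges G. e \<subseteq> verts G \<and> card e = 2)"

definition graph_iso_map :: "('v \<Rightarrow> 'w) \<Rightarrow> 'v graph \<Rightarrow> 'w graph \<Rightarrow> bool" where
  "graph_iso_map f G H \<longleftrightarrow> bij_betw f (verts G) (verts H) \<and>
     (\<forall>u\<in>verts G. \<forall>v\<in>verts G. {u, v} \<in> edges G \<longleftrightarrow> {f u, f v} \<in> edges H)"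

definition graph_isomorphic :: "'v graph \<Rightarrow> 'w graph \<Rightarrow> bool" where
  "graph_isomorphic G H \<longleftrightarrow> (\<exists>f. graph_iso_map f G H)"

definition induced_subgraph :: "'v set \<Rightarrow> 'v graph \<Rightarrow> 'v graph" where
  "induced_subgraph W G = (W, {e \<in> edges G. e \<subseteq> W})"

definition is_induced_subgraph :: "'v graph \<Rightarrow> 'v graph \<Rightarrow> bool" where
  "is_induced_subgraph H G \<longleftrightarrow>
     (\<exists>W. W \<subseteq> verts G \<and> W \<noteq> {} \<and> H = induced_subgraph W G)"

definition sym_diff :: "'a set \<Rightarrow> 'a set \<Rightarrow> 'a set" where
  "sym_diff A B = (A - B) \<union> (B - A)"

text \<open>Super X-set parameter, restricted to graphs whose vertices come from type 'v.\<close>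
definition super_X_param :: "('v graph \<Rightarrow> 'v set set) \<Rightarrow> bool" where
  "super_X_param X \<longleftrightarrow>
     (\<forall>G. is_graph G \<longrightarrow> X G \<subseteq> Pow (verts G) \<and> X G \<noteq> {} \<and>
        (\<forall>S\<in>X G. \<forall>S'. S \<subseteq> S' \<and> S' \<subseteq> verts G \<longrightarrow> S' \<in> X G)) \<and>
     (\<forall>G G' f. is_graph G \<and> is_graph G' \<and> graph_iso_map f G G' \<longrightarrow>
        (\<forall>S\<in>X G. f ` S \<in> X G'))"

definition TAR_graph :: "('v graph \<Rightarrow> 'v set set) \<Rightarrow> 'v graph \<Rightarrow> 'v set graph" where
  "TAR_graph X G = (X G,
     {{S1, S2} | S1 S2. S1 \<in> X G \<and> S2 \<in> X G \<and> card (sym_diff S1 S2) = 1})"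

definition hypercube :: "nat \<Rightarrow> nat set graph" where
  "hypercube t = (Pow {..<t},
     {{A, B} | A B. A \<subseteq> {..<t} \<and> B \<subseteq> {..<t} \<and> card (sym_diff A B) = 1})"

end

theory Submission
  imports Defs
begin
lemma sd_inv: "sym_diff a b = c \<Longrightarrow> b = sym_diff a c" unfolding sym_diff_def by blast
lemma sd_cancel: "sym_diff a b = sym_diff a c \<Longrightarrow> b = c" unfolding sym_diff_def by blast
lemma sd_assoc: "sym_diff (sym_diff a b) c = sym_diff a (sym_diff b c)" unfolding sym_diff_def by blast
lemma sd_comm: "sym_diff a b = sym_diff b a" unfolding sym_diff_def by blast
lemma sd_ins: "y \<notin> D \<Longrightarrow> sym_diff (sym_diff a D) {y} = sym_diff a (insert y D)" unfolding sym_diff_def by blast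
lemma sq: assumes "sym_diff a b = {x}" "sym_diff a c = {y}" "sym_diff b e = {z}" "sym_diff c e = {w}" "b \<noteq> c" "a \<noteq> e" shows "w = x"
proof -
  have b: "b = sym_diff a {x}" and c: "c = sym_diff a {y}" using assms(1,2) sd_inv by blast+
  have e1: "e = sym_diff b {z}" and e2: "e = sym_diff c {w}" using assms(3,4) sd_inv by blast+
  have xy: "x \<noteq> y" using b c assms(5) by blast
  have "x \<noteq> z" using e1 b assms(6) unfolding sym_diff_def by blast
  have "sym_diff a (sym_diff {x} {z}) = sym_diff a (sym_diff {y} {w})"
    using e1 e2 b c sd_assoc by metis
  hence "sym_diff {x} {z} = sym_diff {y} {w}" by (rule sd_cancel)
  moreover have "x \<in> sym_diff {x} {z}" using \<open>x \<noteq> z\<close> unfolding sym_diff_def by blast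
  ultimately have "x \<in> sym_diff {y} {w}" by simp
  thus ?thesis using xy unfolding sym_diff_def by blast
qed

lemma sd_single: "sym_diff (insert i A) A = {i} \<longleftrightarrow> i \<notin> A" unfolding sym_diff_def by blast

lemma cube_rep:
  fixes g :: "nat set \<Rightarrow> 'v set"
  assumes inj: "inj_on g (Pow {..<t})"
    and adj: "\<And>A B. A \<subseteq> {..<t} \<Longrightarrow> B \<subseteq> {..<t} \<Longrightarrow>
               card (sym_diff A B) = 1 \<longleftrightarrow> card (sym_diff (g A) (g B)) = 1"
  shows "\<exists>d. inj_on d {..<t} \<and> (\<forall>A\<subseteq>{..<t}. g A = sym_diff (g {}) (d ` A))"
proof -
  have step1: "\<exists>x. sym_diff (g A) (g (insert i A)) = {x}"
    if "A \<subseteq> {..<t}" "i < t" "i \<notin> A" for A i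
  proof -
    have "sym_diff A (insert i A) = {i}" using that(3) unfolding sym_diff_def by blast
    hence c1: "card (sym_diff A (insert i A)) = 1" by simp
    have iA: "insert i A \<subseteq> {..<t}" using that by simp
    have "card (sym_diff (g A) (g (insert i A))) = 1" using adj[OF that(1) iA] c1 by simp
    thus ?thesis by (simp add: card_1_singleton_iff)
  qed
  define d where "d i = (THE x. sym_diff (g {}) (g {i}) = {x})" for i
  have P: "\<forall>i<t. i \<notin> A \<longrightarrow> sym_diff (g A) (g (insert i A)) = {d i}"
    if "A \<subseteq> {..<t}" for A
  proof -
    have "finite A" using that finite_subset by blast
    thus ?thesis using that
    proof (induction A rule: finite_induct)
      case empty
      show ?case
      proof (intro allI impI)
        fix i assume "i < t" "i \<notin> {}"
        obtain x where x: "sym_diff (g {}) (g {i}) = {x}" using step1[of "{}" i] \<open>i < t\<close> by auto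
        have "d i = x" unfolding d_def x by (rule the_equality) auto
        thus "sym_diff (g {}) (g (insert i {})) = {d i}" using x by simp
      qed
    next
      case (insert j A)
      show ?case
      proof (intro allI impI)
        fix i assume i: "i < t" "i \<notin> insert j A"
        have A: "A \<subseteq> {..<t}" "j < t" using insert.prems by auto
        have ab: "sym_diff (g A) (g (insert i A)) = {d i}" using insert.IH[OF A(1)] i by simp
        have ac: "sym_diff (g A) (g (insert j A)) = {d j}" using insert.IH[OF A(1)] A(2) insert.hyps by simp
        obtain z where be: "sym_diff (g (insert i A)) (g (insert j (insert i A))) = {z}"
          using step1[of "insert i A" j] A i insert.hyps by auto
        obtain w where ce: "sym_diff (g (insert j A)) (g (insert i (insert j A))) = {w}"
          using step1[of "insert j A" i] A i insert.hyps by auto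
        have bc: "g (insert i A) \<noteq> g (insert j A)"
        proof
          assume "g (insert i A) = g (insert j A)"
          hence "insert i A = insert j A" using inj_onD[OF inj] A i by simp
          thus False using i insert.hyps by auto
        qed
        have ae: "g A \<noteq> g (insert j (insert i A))"
        proof
          assume "g A = g (insert j (insert i A))"
          hence "A = insert j (insert i A)" using inj_onD[OF inj] A i by simp
          thus False using insert.hyps by auto
        qed
        have "insert j (insert i A) = insert i (insert j A)" by (rule insert_commute)
        hence ce': "sym_diff (g (insert j A)) (g (insert j (insert i A))) = {w}" using ce by simp
        have "w = d i" by (rule sq[OF ab ac be ce' bc ae])
        thus "sym_diff (g (insert j A)) (g (insert i (insert j A))) = {d i}" using ce by simp
      qed
    qed
  qed
  have injd: "inj_on d {..<t}"
  proof
    fix i j assume ij: "i \<in> {..<t}" "j \<in> {..<t}" "d i = d j"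
    have "sym_diff (g {}) (g {i}) = sym_diff (g {}) (g {j})" using P[of "{}"] ij by auto
    hence hg: "g {i} = g {j}" by (rule sd_cancel)
    have "{i} = {j}" using inj_onD[OF inj hg] ij by auto
    thus "i = j" by simp
  qed
  have R: "g A = sym_diff (g {}) (d ` A)" if "A \<subseteq> {..<t}" for A
  proof -
    have "finite A" using that finite_subset by blast
    thus ?thesis using that
    proof (induction A rule: finite_induct)
      case empty
      then show ?case unfolding sym_diff_def by simp
    next
      case (insert i A)
      have "sym_diff (g A) (g (insert i A)) = {d i}" using P[of A] insert.prems insert.hyps by simp
      hence "g (insert i A) = sym_diff (g A) {d i}" by (rule sd_inv)
      moreover have "d i \<notin> d ` A"
      proof
        assume "d i \<in> d ` A"
        then obtain k where k: "k \<in> A" "d i = d k" by auto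
        have "i \<in> {..<t}" "k \<in> {..<t}" using insert.prems k(1) by auto
        hence "i = k" using inj_onD[OF injd k(2)] by simp
        thus False using k(1) insert.hyps by simp
      qed
      ultimately show ?case using insert.IH insert.prems sd_ins by simp
    qed
  qed
  show ?thesis using injd R by blast
qed
lemma hc_edge:
  assumes "A \<subseteq> {..<t}" "B \<subseteq> {..<t}"
  shows "{A, B} \<in> edges (hypercube t) \<longleftrightarrow> card (sym_diff A B) = 1"
proof
  assume "{A, B} \<in> edges (hypercube t)"
  then obtain A' B' where e: "{A, B} = {A', B'}" "card (sym_diff A' B') = 1"
    unfolding hypercube_def edges_def by auto
  from e(1) have "(A = A' \<and> B = B') \<or> (A = B' \<and> B = A')" by (simp add: doubleton_eq_iff)
  thus "card (sym_diff A B) = 1" using e(2) sd_comm by metis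
next
  assume "card (sym_diff A B) = 1"
  thus "{A, B} \<in> edges (hypercube t)" unfolding hypercube_def edges_def using assms by auto
qed

lemma tar_edge:
  assumes "u \<in> X G" "v \<in> X G"
  shows "{u, v} \<in> edges (TAR_graph X G) \<longleftrightarrow> card (sym_diff u v) = 1"
proof
  assume "{u, v} \<in> edges (TAR_graph X G)"
  then obtain A' B' where e: "{u, v} = {A', B'}" "card (sym_diff A' B') = 1"
    unfolding TAR_graph_def edges_def by auto
  from e(1) have "(u = A' \<and> v = B') \<or> (u = B' \<and> v = A')" by (simp add: doubleton_eq_iff)
  thus "card (sym_diff u v) = 1" using e(2) sd_comm by metis
next
  assume "card (sym_diff u v) = 1"
  thus "{u, v} \<in> edges (TAR_graph X G)" unfolding TAR_graph_def edges_def using assms by auto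
qed

theorem lemma2p21:
  fixes X :: "'v graph \<Rightarrow> 'v set set"
    and G :: "'v graph"
    and H :: "'v set graph"
    and t :: nat
  assumes "super_X_param X"
    and "is_graph G"
    and "is_induced_subgraph H (TAR_graph X G)"
    and "graph_isomorphic H (hypercube t)"
  shows "\<exists>S T. S \<in> X G \<and> T \<in> X G \<and> S \<subseteq> T \<and> card (T - S) = t \<and>
           verts H = {R. S \<subseteq> R \<and> R \<subseteq> T}"
proof -
  obtain W where W: "W \<subseteq> X G" "H = induced_subgraph W (TAR_graph X G)"
    using assms(3) unfolding is_induced_subgraph_def by (auto simp: verts_def TAR_graph_def)
  have vH: "verts H = W" using W(2) unfolding induced_subgraph_def verts_def by simp
  have eH: "edges H = {e \<in> edges (TAR_graph X G). e \<subseteq> W}"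
    using W(2) unfolding induced_subgraph_def edges_def by simp
  obtain f where bf: "bij_betw f W (Pow {..<t})"
    and ef: "\<And>u v. u \<in> W \<Longrightarrow> v \<in> W \<Longrightarrow> {u, v} \<in> edges H \<longleftrightarrow> {f u, f v} \<in> edges (hypercube t)"
    using assms(4) unfolding graph_isomorphic_def graph_iso_map_def vH
    by (auto simp: verts_def hypercube_def)
  define g where "g = inv_into W f"
  have bg: "bij_betw g (Pow {..<t}) W" unfolding g_def by (rule bij_betw_inv_into[OF bf])
  have fg: "f (g A) = A" if "A \<subseteq> {..<t}" for A
    unfolding g_def using bf that by (simp add: bij_betw_def f_inv_into_f)
  have gW: "g A \<in> W" if "A \<subseteq> {..<t}" for A using bg that by (auto simp: bij_betw_def)
  have adj: "card (sym_diff A B) = 1 \<longleftrightarrow> card (sym_diff (g A) (g B)) = 1"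
    if "A \<subseteq> {..<t}" "B \<subseteq> {..<t}" for A B
  proof -
    have "card (sym_diff A B) = 1 \<longleftrightarrow> {f (g A), f (g B)} \<in> edges (hypercube t)"
      using hc_edge[OF that] fg that by simp
    also have "\<dots> \<longleftrightarrow> {g A, g B} \<in> edges H" using ef gW that by simp
    also have "\<dots> \<longleftrightarrow> card (sym_diff (g A) (g B)) = 1"
    proof -
      have "g A \<in> X G" "g B \<in> X G" using gW that W(1) by auto
      moreover have "g A \<in> W" "g B \<in> W" using gW that by auto
      ultimately have "{g A, g B} \<in> edges H \<longleftrightarrow> {g A, g B} \<in> edges (TAR_graph X G)"
        using eH by simp
      thus ?thesis using tar_edge[of "g A" X G "g B"] \<open>g A \<in> X G\<close> \<open>g B \<in> X G\<close> by simp
    qed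
    finally show ?thesis .
  qed
  have injg: "inj_on g (Pow {..<t})" using bg by (simp add: bij_betw_def)
  obtain d where injd: "inj_on d {..<t}" and R: "\<And>A. A \<subseteq> {..<t} \<Longrightarrow> g A = sym_diff (g {}) (d ` A)"
    using cube_rep[OF injg adj] by blast
  define g0 where "g0 = g {}"
  define D where "D = d ` {..<t}"
  define S where "S = g0 - D"
  define T where "T = g0 \<union> D"
  have Wimg: "W = g ` Pow {..<t}" using bg by (simp add: bij_betw_def)
  have WI: "W = {R. S \<subseteq> R \<and> R \<subseteq> T}"
  proof
    show "W \<subseteq> {R. S \<subseteq> R \<and> R \<subseteq> T}"
    proof
      fix R assume "R \<in> W"
      then obtain A where A: "A \<subseteq> {..<t}" "R = g A" using Wimg by auto
      have "R = sym_diff g0 (d ` A)" using R[OF A(1)] A(2) unfolding g0_def by simp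
      moreover have "d ` A \<subseteq> D" using A(1) D_def by auto
      ultimately show "R \<in> {R. S \<subseteq> R \<and> R \<subseteq> T}" unfolding S_def T_def sym_diff_def by blast
    qed
  next
    show "{R. S \<subseteq> R \<and> R \<subseteq> T} \<subseteq> W"
    proof
      fix R assume "R \<in> {R. S \<subseteq> R \<and> R \<subseteq> T}"
      hence RS: "S \<subseteq> R" "R \<subseteq> T" by auto
      define A where "A = {i \<in> {..<t}. d i \<in> sym_diff R g0}"
      have sub: "sym_diff R g0 \<subseteq> D" using RS unfolding S_def T_def sym_diff_def by blast
      have "d ` A = sym_diff R g0"
      proof
        show "d ` A \<subseteq> sym_diff R g0" unfolding A_def by auto
        show "sym_diff R g0 \<subseteq> d ` A"
        proof
          fix x assume x: "x \<in> sym_diff R g0"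
          then obtain i where "i < t" "x = d i" using sub D_def by auto
          thus "x \<in> d ` A" using x unfolding A_def by auto
        qed
      qed
      moreover have A: "A \<subseteq> {..<t}" unfolding A_def by auto
      ultimately have "g A = sym_diff g0 (sym_diff R g0)" using R[OF A] unfolding g0_def by simp
      also have "\<dots> = R" unfolding sym_diff_def by blast
      finally show "R \<in> W" using Wimg A by auto
    qed
  qed
  have "T - S = D" unfolding S_def T_def by blast
  hence cardTS: "card (T - S) = t" using injd unfolding D_def by (simp add: card_image)
  have ST: "S \<subseteq> T" unfolding S_def T_def by blast
  have "S \<in> W" "T \<in> W" using ST unfolding WI by auto
  hence SX: "S \<in> X G" "T \<in> X G" using W(1) by auto
  show ?thesis
    apply (rule exI[of _ S], rule exI[of _ T])
    using SX ST cardTS vH WI by simp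
qed

end
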